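(* Let $\mathbf{u}=(u_n)$ be an a-sequence such that $s_\mathbf{u}(\mathbb{T})$ is open in $(\mathbb{T},\tau_\mathbf{u})$. Then the sequence of ratios $(q_n)$ of $\mathbf{u}$ is bounded.
   Context: An a-sequence is a strictly increasing sequence of integers $\mathbf{u}=(u_n)_{n\in\mathbb{N}}$ with $u_n\mid u_{n+1}$ for all $n$; its ratios are $q_0=u_0$ and $q_n=u_n/u_{n-1}$ for $n>0$. $\mathbb{T}=\mathbb{R}/\mathbb{Z}$, $\|x\|$ is the distance from $x$ to the nearest integer, $d(x,y)=\|x-y\|$. $s_\mathbf{u}(\mathbb{T})=\{x\in\mathbb{T}: u_nx\to0\text{ in }\mathbb{T}\}$. $\tau_\mathbf{u}$ is the topology on $\mathbb{T}$ induced by the metric $\varrho_\mathbf{u}(x,y)=\sup_n\max\{d(x,y),d(u_nx,u_ny)\}$. *)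

theory Defs
  imports "HOL-Analysis.Analysis"
begin

text \<open>The circle group T = R/Z is represented by real representatives;
  all notions below are invariant under integer translation.\<close>

definition a_sequence :: "(nat \<Rightarrow> int) \<Rightarrow> bool" where
  "a_sequence u \<longleftrightarrow> strict_mono u \<and> (\<forall>n. u n dvd u (Suc n))"

definition ratio :: "(nat \<Rightarrow> int) \<Rightarrow> nat \<Rightarrow> int" where
  "ratio u n = (if n = 0 then u 0 else u n div u (n - 1))"

definition tnorm :: "real \<Rightarrow> real" where
  "tnorm x = \<bar>x - of_int (round x)\<bar>"

definition tdist :: "real \<Rightarrow> real \<Rightarrow> real" where
  "tdist x y = tnorm (x - y)"

definition s_u :: "(nat \<Rightarrow> int) \<Rightarrow> real set" where
  "s_u u = {x. (\<lambda>n. tnorm (of_int (u n) * x)) \<longlonglongrightarrow> 0}"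

definition rho_u :: "(nat \<Rightarrow> int) \<Rightarrow> real \<Rightarrow> real \<Rightarrow> real" where
  "rho_u u x y = (SUP n. max (tdist x y) (tdist (of_int (u n) * x) (of_int (u n) * y)))"

definition open_tau_u :: "(nat \<Rightarrow> int) \<Rightarrow> real set \<Rightarrow> bool" where
  "open_tau_u u S \<longleftrightarrow> (\<forall>x\<in>S. \<exists>e>0. \<forall>y. rho_u u x y < e \<longrightarrow> y \<in> S)"

end

theory Submission
  imports Defs
begin

lemma tnorm_le: "tnorm x \<le> \<bar>x - of_int k\<bar>"
proof -
  define r where "r = round x"
  have h: "\<bar>of_int r - x\<bar> \<le> 1/2" unfolding r_def by (rule of_int_round_abs_le)
  show ?thesis
  proof (cases "k = r")
    case True then show ?thesis unfolding tnorm_def r_def by simp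
  next
    case False
    then have "\<bar>k - r\<bar> \<ge> 1" by linarith
    then have "\<bar>of_int k - of_int r :: real\<bar> \<ge> 1"
      by (metis of_int_1_le_iff of_int_abs of_int_diff)
    then show ?thesis unfolding tnorm_def r_def[symmetric] using h by linarith
  qed
qed

lemma tnorm_shift:
  assumes "0 \<le> T" "T \<le> 1/2"
  shows "tnorm (of_int k + T) = T"
proof (rule antisym)
  show "tnorm (of_int k + T) \<le> T" using tnorm_le[of "of_int k + T" k] assms by simp
  define j where "j = round (of_int k + T) - k"
  have e: "tnorm (of_int k + T) = \<bar>T - of_int j\<bar>" unfolding tnorm_def j_def by simp
  show "T \<le> tnorm (of_int k + T)"
  proof (cases "j \<le> 0")
    case True then have "(of_int j::real) \<le> 0" by simp
    then show ?thesis using e assms by linarith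
  next
    case False then have "(of_int j::real) \<ge> 1" by simp
    then show ?thesis using e assms by linarith
  qed
qed

lemma aseq_u1_pos:
  assumes "a_sequence u" shows "u 1 > 0"
proof (rule ccontr)
  assume n: "\<not> u 1 > 0"
  have sm: "strict_mono u" and d: "\<And>n. u n dvd u (Suc n)" using assms unfolding a_sequence_def by auto
  have l01: "u 0 < u 1" and l12: "u 1 < u 2" using sm by (auto simp: strict_mono_def)
  show False
  proof (cases "u 1 = 0")
    case True
    then have "u 2 = 0" using d[of 1] by (simp add: numeral_2_eq_2)
    then show False using l12 True by simp
  next
    case False
    then have "u 1 < 0" using n by simp
    have "\<bar>u 0\<bar> \<le> \<bar>u 1\<bar>" using d[of 0] False
      by (simp add: dvd_imp_le_int)
    then show False using l01 \<open>u 1 < 0\<close> by linarith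
  qed
qed

lemma aseq_v:
  assumes "a_sequence u"
  shows "u (Suc n) > 0" "u (Suc (Suc n)) \<ge> 2 * u (Suc n)"
proof -
  have sm: "strict_mono u" and d: "\<And>n. u n dvd u (Suc n)" using assms unfolding a_sequence_def by auto
  have "u 1 \<le> u (Suc n)" using sm by (simp add: strict_mono_less_eq)
  then show p: "u (Suc n) > 0" using aseq_u1_pos[OF assms] by simp
  obtain t where t: "u (Suc (Suc n)) = u (Suc n) * t" using d by (meson dvdE)
  have "u (Suc (Suc n)) > u (Suc n)" using sm by (simp add: strict_mono_def)
  then have "t > 1" using t p
    by (metis less_le_not_le linorder_le_less_linear mult.right_neutral mult_left_mono not_less)
  then have "t \<ge> 2" by simp
  then show "u (Suc (Suc n)) \<ge> 2 * u (Suc n)" using t p by (simp add: mult.commute)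
qed

theorem mainTheorem9:
  fixes u :: "nat \<Rightarrow> int"
  assumes "a_sequence u"
    and "open_tau_u u (s_u u)"
  shows "\<exists>B. \<forall>n. \<bar>ratio u n\<bar> \<le> B"
proof (rule ccontr)
  assume nb: "\<not> (\<exists>B. \<forall>n. \<bar>ratio u n\<bar> \<le> B)"
  have "0 \<in> s_u u" unfolding s_u_def tnorm_def by simp
  then obtain e where e: "e > 0" and H: "\<And>y. rho_u u 0 y < e \<Longrightarrow> y \<in> s_u u"
    using assms(2) unfolding open_tau_u_def by blast
  define v where "v n = u (Suc n)" for n
  define q where "q n = v (Suc n) div v n" for n
  define c where "c = min e (1/2) / 3"
  define b where "b k = floor (c * of_int (q k))" for k
  define f :: "nat \<Rightarrow> real" where "f k = of_int (b k) / of_int (v (Suc k))" for k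
  define y where "y = suminf f"
  have c0: "c > 0" and c1: "c \<le> 1/6" and ce: "2*c < e" using e unfolding c_def by auto
  have vpos: "v n > 0" for n unfolding v_def using aseq_v[OF assms(1)] by simp
  have v2: "2 * v n \<le> v (Suc n)" for n unfolding v_def using aseq_v[OF assms(1)] by simp
  have vdvd: "v n dvd v (Suc n)" for n unfolding v_def using assms(1) a_sequence_def by auto
  have qv: "q n * v n = v (Suc n)" for n unfolding q_def using vdvd by simp
  have q2: "q n \<ge> 2" for n
  proof -
    have "2 * v n \<le> q n * v n" using v2 qv by simp
    then show ?thesis using vpos[of n] by simp
  qed
  have vge: "2^j * v n \<le> v (n+j)" for n j
  proof (induction j)
    case 0 then show ?case by simp
  next
    case (Suc j)
    have "2^Suc j * v n = 2 * (2^j * v n)" by simp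
    also have "\<dots> \<le> 2 * v (n+j)" using Suc by simp
    also have "\<dots> \<le> v (n + Suc j)" using v2[of "n+j"] by simp
    finally show ?case .
  qed
  have vchain: "k \<le> n \<Longrightarrow> v k dvd v n" for k n
  proof (induction n rule: dec_induct)
    case base then show ?case by simp
  next
    case (step n) then show ?case using vdvd dvd_trans by blast
  qed
  have vpr: "real_of_int (v n) > 0" for n using vpos[of n] by simp
  have qvr: "real_of_int (q n) * real_of_int (v n) = real_of_int (v (Suc n))" for n
    using qv[of n] by (metis of_int_mult)
  have qr: "real_of_int (q n) \<ge> 2" for n using q2[of n] by simp
  have b0: "b k \<ge> 0" for k unfolding b_def using c0 q2[of k] by simp
  have f0: "f k \<ge> 0" for k unfolding f_def using b0[of k] vpr[of "Suc k"] by simp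
  have fle: "f k \<le> c / of_int (v k)" for k
  proof -
    have "of_int (b k) \<le> c * of_int (q k)" unfolding b_def by simp
    then have "f k \<le> c * of_int (q k) / of_int (v (Suc k))"
      unfolding f_def using vpr[of "Suc k"] by (simp add: divide_right_mono)
    also have "\<dots> = c * of_int (q k) / (of_int (q k) * of_int (v k))" using qvr[of k] by simp
    also have "\<dots> = c / of_int (v k)"
    proof -
      have "real_of_int (q k) \<noteq> 0" using qr[of k] by linarith
      then show ?thesis using vpr[of k] by (simp add: field_simps)
    qed
    finally show ?thesis .
  qed
  have tb: "of_int (v n) * f (j + n) \<le> c * (1/2)^j" for n j
  proof -
    have "of_int (v n) * f (j + n) \<le> of_int (v n) * (c / of_int (v (n+j)))"
      using mult_left_mono[OF fle[of "j+n"] less_imp_le[OF vpr[of n]]] by (simp add: add.commute)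
    also have "\<dots> \<le> of_int (v n) * (c / (2^j * of_int (v n)))"
    proof -
      have "(2::real)^j * of_int (v n) \<le> of_int (v (n+j))" using vge[of j n]
        by (metis of_int_le_iff of_int_mult of_int_numeral of_int_power)
      then have "c / of_int (v (n+j)) \<le> c / (2^j * of_int (v n))"
        using c0 vpr[of n] vpr[of "n+j"] by (intro divide_left_mono) (auto intro!: mult_pos_pos)
      then show ?thesis by (rule mult_left_mono) (use vpr[of n] in \<open>simp add: less_imp_le\<close>)
    qed
    also have "\<dots> = c * (1/2)^j" using vpr[of n] by (simp add: power_one_over)
    finally show ?thesis .
  qed
  have geo: "summable (\<lambda>j. c * (1/2::real)^j)" by (simp add: summable_geometric)
  have geos: "(\<Sum>j. c * (1/2::real)^j) = 2*c"
    using suminf_geometric[of "1/2::real"] by (simp add: suminf_mult)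
  have sumT: "summable (\<lambda>j. of_int (v n) * f (j + n))" for n
  proof (rule summable_comparison_test[OF _ geo], intro exI[of _ 0] allI impI)
    fix j :: nat
    have "0 \<le> real_of_int (v n) * f (j + n)" using f0 vpr[of n] by simp
    then show "norm (real_of_int (v n) * f (j + n)) \<le> c * (1/2)^j" using tb[of n j] by simp
  qed
  have fle2: "f j \<le> c * (1/2)^j" for j
  proof -
    have "f j \<le> of_int (v 0) * f (j + 0)" using f0[of j] vpos[of 0]
      by (simp add: mult_le_cancel_right1)
    then show ?thesis using tb[of 0 j] by linarith
  qed
  have sumf: "summable f"
  proof (rule summable_comparison_test[OF _ geo], intro exI[of _ 0] allI impI)
    fix j :: nat
    show "norm (f j) \<le> c * (1/2)^j" using fle2[of j] f0[of j] by simp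
  qed
  have Tnn: "0 \<le> real_of_int (v n) * f (j + n)" for n j using f0[of "j+n"] vpr[of n] by simp
  define T where "T n = (\<Sum>j. of_int (v n) * f (j + n))" for n
  have T0: "0 \<le> T n" for n unfolding T_def
  proof (rule suminf_nonneg[OF sumT])
    fix j show "0 \<le> real_of_int (v n) * f (j + n)" using f0[of "j+n"] vpr[of n] by simp
  qed
  have T1: "T n \<le> 2*c" for n unfolding T_def geos[symmetric]
    by (rule suminf_le[OF _ sumT geo]) (use tb in auto)
  have T2: "T n \<ge> c - 1 / of_int (q n)" for n
  proof -
    have "of_int (v n) * f (0 + n) \<le> T n" unfolding T_def
      using sum_le_suminf[OF sumT[of n], of "{0}"] Tnn[of n] by simp
    moreover have "of_int (v n) * f n = of_int (b n) / of_int (q n)"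
      unfolding f_def using qvr[of n] vpr[of n] vpr[of "Suc n"] qr[of n] by (simp add: field_simps)
    moreover have "of_int (b n) \<ge> c * of_int (q n) - 1" unfolding b_def by linarith
    moreover have "(c * of_int (q n) - 1) / of_int (q n) \<le> of_int (b n) / of_int (q n)"
      using calculation(3) qr[of n] by (intro divide_right_mono) auto
    moreover have "(c * of_int (q n) - 1) / of_int (q n) = c - 1 / of_int (q n)"
      using qr[of n] by (simp add: field_simps)
    ultimately show ?thesis by simp
  qed
  have decomp: "\<exists>I. of_int (v n) * y = of_int I + T n" for n
  proof -
    have "of_int (v n) * y = (\<Sum>k. of_int (v n) * f k)" unfolding y_def
      using sumf by (simp add: suminf_mult)
    also have "\<dots> = T n + (\<Sum>k<n. of_int (v n) * f k)" unfolding T_def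
      using summable_mult[OF sumf] by (subst suminf_split_initial_segment) auto
    also have "(\<Sum>k<n. of_int (v n) * f k) = of_int (\<Sum>k<n. b k * (v n div v (Suc k)))"
    proof -
      have "of_int (v n) * f k = of_int (b k * (v n div v (Suc k)))" if "k < n" for k
      proof -
        have "v (Suc k) dvd v n" using vchain that by simp
        then have "real_of_int (v n div v (Suc k)) = of_int (v n) / of_int (v (Suc k))"
          by (rule of_int_div)
        then show ?thesis unfolding f_def by simp
      qed
      then show ?thesis by simp
    qed
    finally show ?thesis by (metis add.commute)
  qed
  have y0: "0 \<le> y" "y \<le> 2*c"
    unfolding y_def using suminf_nonneg[OF sumf f0] apply simp
    unfolding geos[symmetric] by (rule suminf_le[OF _ sumf geo]) (use fle2 in auto)
  have bnd: "max (tdist 0 y) (tdist 0 (of_int (u n) * y)) \<le> 2*c" for n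
  proof -
    have a: "tdist 0 y \<le> 2*c" unfolding tdist_def using tnorm_le[of "0 - y" 0] y0 by simp
    have "tdist 0 (of_int (u n) * y) \<le> 2*c"
    proof (cases n)
      case 0
      obtain t where t: "v 0 = u 0 * t" using vdvd[of 0] assms(1) unfolding a_sequence_def v_def
        by (meson dvdE)
      have t0: "t \<noteq> 0" using t vpos[of 0] by auto
      then have tr: "\<bar>real_of_int t\<bar> \<ge> 1" by linarith
      have vy: "of_int (v 0) * y = T 0" unfolding T_def y_def
        using sumf by (simp add: suminf_mult)
      have "of_int (v 0) * y = (of_int (u 0) * y) * of_int t" using t by simp
      then have "\<bar>of_int (u 0) * y\<bar> * \<bar>of_int t\<bar> = \<bar>T 0\<bar>" using vy
        by (simp add: abs_mult)
      also have "\<dots> = T 0" using T0[of 0] by simp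
      finally have e1: "\<bar>of_int (u 0) * y\<bar> * \<bar>of_int t\<bar> = T 0" .
      have "\<bar>of_int (u 0) * y\<bar> \<le> \<bar>of_int (u 0) * y\<bar> * \<bar>of_int t\<bar>"
        using tr by (simp add: mult_le_cancel_left1)
      then have "\<bar>of_int (u 0) * y\<bar> \<le> T 0" using e1 by simp
      moreover have "tdist 0 (of_int (u n) * y) \<le> \<bar>0 - of_int (u n) * y - of_int 0\<bar>"
        unfolding tdist_def by (rule tnorm_le)
      ultimately show ?thesis using T1[of 0] 0 by simp
    next
      case (Suc m)
      obtain I where I: "of_int (v m) * y = of_int I + T m" using decomp by blast
      have "tdist 0 (of_int (u n) * y) \<le> \<bar>0 - of_int (u n) * y - of_int (- I)\<bar>"
        unfolding tdist_def by (rule tnorm_le)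
      also have "\<dots> = T m" using I T0[of m] Suc unfolding v_def by simp
      finally show ?thesis using T1[of m] by simp
    qed
    then show ?thesis using a by simp
  qed
  have "rho_u u 0 y \<le> 2*c" unfolding rho_u_def by (rule cSUP_least) (use bnd in auto)
  then have "y \<in> s_u u" using H ce by simp
  then have "(\<lambda>n. tnorm (of_int (u n) * y)) \<longlonglongrightarrow> 0" unfolding s_u_def by simp
  then have "(\<lambda>n. tnorm (of_int (v n) * y)) \<longlonglongrightarrow> 0" unfolding v_def by (rule LIMSEQ_Suc)
  moreover have "tnorm (of_int (v n) * y) = T n" for n
  proof -
    obtain I where I: "of_int (v n) * y = of_int I + T n" using decomp by blast
    show ?thesis unfolding I by (rule tnorm_shift) (use T0[of n] T1[of n] c1 in auto)
  qed
  ultimately have "T \<longlonglongrightarrow> 0" by simp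
  then have "eventually (\<lambda>n. T n < c/2) sequentially" using c0 by (intro order_tendstoD(2)) auto
  then obtain N where N: "\<And>n. n \<ge> N \<Longrightarrow> T n < c/2" unfolding eventually_sequentially by blast
  have qsmall: "real_of_int (q n) < 2/c" if "n \<ge> N" for n
  proof -
    have "c - 1 / of_int (q n) < c/2" using T2[of n] N[OF that] by linarith
    then have "c/2 < 1 / of_int (q n)" by linarith
    then have "c/2 * of_int (q n) < 1" using qr[of n] by (simp add: field_simps)
    then show ?thesis using c0 by (simp add: field_simps)
  qed
  define Bq where "Bq = ceiling (2/c) + (\<Sum>k<N. q k)"
  have qB: "q n \<le> Bq" for n
  proof (cases "n < N")
    case True
    have "q n \<le> (\<Sum>k<N. q k)" using True q2 by (intro member_le_sum) (auto intro: order_trans[of 0 2])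
    moreover have "ceiling (2/c) \<ge> 0"
    proof -
      have "(0::real) < 2/c" using c0 by simp
      then show ?thesis by linarith
    qed
    ultimately show ?thesis unfolding Bq_def by linarith
  next
    case False
    then have "real_of_int (q n) < 2/c" using qsmall by simp
    then have "q n \<le> ceiling (2/c)" by linarith
    moreover have "(\<Sum>k<N. q k) \<ge> 0" using q2 by (intro sum_nonneg) (auto intro: order_trans[of 0 2])
    ultimately show ?thesis unfolding Bq_def by linarith
  qed
  have "\<bar>ratio u n\<bar> \<le> \<bar>u 0\<bar> + \<bar>u 1 div u 0\<bar> + Bq" for n
  proof -
    have Bq0: "Bq \<ge> 0" using qB[of 0] q2[of 0] by simp
    consider "n = 0" | "n = 1" | m where "n = Suc (Suc m)" by (metis One_nat_def not0_implies_Suc)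
    then show ?thesis
    proof cases
      case 1 then show ?thesis using Bq0 by (simp add: ratio_def)
    next
      case 2 then show ?thesis using Bq0 by (simp add: ratio_def)
    next
      case 3
      then have "ratio u n = q m" by (simp add: ratio_def q_def v_def)
      then show ?thesis using qB[of m] q2[of m] by simp
    qed
  qed
  then show False using nb by blast
qed

end
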